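(* Let $D\subset\tilde X=\mathrm{UT}\mathbb{H}^3$ be a view (material, ideal or hyperideal), with coordinates $(x_u,x_f,x_s)$ near $D$ and sets $D_\varepsilon$ as described in the context. Then for all $t\ge0$, all $0<\varepsilon<1$ and all $(x_u,x_f,x_s)\in D_\varepsilon$, \[d_{\tilde X}\big(\varphi_t(x_u),\varphi_t(x_u,x_f,x_s)\big)\le 2\varepsilon.\]
   Context: $\tilde X=\mathrm{UT}\mathbb{H}^3$ with a fixed isometry-invariant riemannian metric and distance $d_{\tilde X}$; $\pi\colon\tilde X\to\mathbb{H}^3$ is the projection and $\varphi_t$ the geodesic flow. A view $D$ is: $\mathrm{UT}_p\mathbb{H}^3$ (material); the outward normals to a horosphere (ideal); or the unit normals to a geodesic plane pointing to one side (hyperideal). For $x_u\in D$, let $H^s(x_u)\subset\tilde X$ be the set of inward-pointing unit normals to the horosphere through $\pi(x_u)$ centred at the ideal endpoint of the ray of $x_u$; it contains $x_u$. For a submanifold $N$, $d_N$ denotes the induced path metric. For $r\in\tilde X$ close to $D$ there is a unique $x_u\in D$ whose ray converges to the same ideal point as that of $r$; let $x_s$ be the intersection of $H^s(x_u)$ with the flow line through $r$, and $x_f$ the signed flow time from $x_s$ to $r$; then $r$ is written $(x_u,x_f,x_s)$, so $r=\varphi_{x_f}(x_s)$, and $(x_u,0,x_u)=x_u$. Set $B^s_\varepsilon(x_u)=\{x_s\in H^s(x_u): d_{H^s(x_u)}(x_u,x_s)\le\varepsilon\}$ and $D_\varepsilon=\{(x_u,x_f,x_s): x_u\in D,\ x_f\in(-\varepsilon,\varepsilon),\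 x_s\in B^s_\varepsilon(x_u)\}$. *)

theory Defs
  imports "HOL-Analysis.Analysis"
begin

type_synonym R4 = "real^4"
type_synonym TX = "R4 \<times> R4"

definition mink :: "R4 \<Rightarrow> R4 \<Rightarrow> real" where
  "mink x y = - (x$0 * y$0) + x$1 * y$1 + x$2 * y$2 + x$3 * y$3"

definition H3 :: "R4 set" where
  "H3 = {p. mink p p = -1 \<and> p$0 > 0}"

definition UT :: "(TX) set" where
  "UT = {(p, v). p \<in> H3 \<and> mink v v = 1 \<and> mink p v = 0}"

definition gflow :: "real \<Rightarrow> TX \<Rightarrow> TX" where
  "gflow t x = (cosh t *\<^sub>R fst x + sinh t *\<^sub>R snd x, sinh t *\<^sub>R fst x + cosh t *\<^sub>R snd x)"

text \<open>Norm of a tangent vector (p',v') at (p,v) for the Sasaki metric: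
  |p'|^2 + |Dv|^2 where Dv is the covariant derivative, i.e. the projection of v'
  onto T_p H^3.\<close>
definition sasaki_norm :: "TX \<Rightarrow> TX \<Rightarrow> real" where
  "sasaki_norm x dx =
     (let p = fst x; p' = fst dx; v' = snd dx; Dv = v' + mink v' p *\<^sub>R p
      in sqrt (mink p' p' + mink Dv Dv))"

definition path_len :: "(real \<Rightarrow> TX) \<Rightarrow> real" where
  "path_len \<gamma> = integral {0..1} (\<lambda>s. sasaki_norm (\<gamma> s) (vector_derivative \<gamma> (at s)))"

definition path_dist :: "(TX) set \<Rightarrow> TX \<Rightarrow> TX \<Rightarrow> real" where
  "path_dist N x y = Inf (path_len ` {\<gamma>. \<gamma> piecewise_C1_differentiable_on {0..1}
       \<and> \<gamma> ` {0..1} \<subseteq> N \<and> \<gamma> 0 = x \<and> \<gamma> 1 = y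
       \<and> (\<lambda>s. sasaki_norm (\<gamma> s) (vector_derivative \<gamma> (at s))) integrable_on {0..1}})"

definition dX :: "TX \<Rightarrow> TX \<Rightarrow> real" where
  "dX = path_dist UT"

definition null_future :: "R4 \<Rightarrow> bool" where
  "null_future l \<longleftrightarrow> mink l l = 0 \<and> l$0 > 0"

definition material_view :: "R4 \<Rightarrow> (TX) set" where
  "material_view p0 = {x \<in> UT. fst x = p0}"

text \<open>Horosphere centred at the ideal point [l] (l future null) passing through p.\<close>
definition horosphere :: "R4 \<Rightarrow> R4 \<Rightarrow> R4 set" where
  "horosphere l p = {q \<in> H3. mink q l = mink p l}"

text \<open>Unit normal at q pointing towards the ideal point [l] (inward for horospheres centred at [l]).\<close>
definition normal_towards :: "R4 \<Rightarrow> R4 \<Rightarrow> R4" where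
  "normal_towards l q = (1 / (- mink q l)) *\<^sub>R l - q"

text \<open>Ideal view: outward unit normals to a horosphere centred at [l].\<close>
definition ideal_view :: "R4 \<Rightarrow> R4 \<Rightarrow> (TX) set" where
  "ideal_view l p = {(q, - normal_towards l q) | q. q \<in> horosphere l p}"

text \<open>Hyperideal view: the unit normals n to the geodesic plane n-perp (n spacelike unit),
  pointing to the side of n.\<close>
definition hyperideal_view :: "R4 \<Rightarrow> (TX) set" where
  "hyperideal_view n = {(q, n) | q. q \<in> H3 \<and> mink q n = 0}"

definition is_view :: "(TX) set \<Rightarrow> bool" where
  "is_view D \<longleftrightarrow>
     (\<exists>p0 \<in> H3. D = material_view p0)
   \<or> (\<exists>l p. null_future l \<and> p \<in> H3 \<and> D = ideal_view l p)
   \<or> (\<exists>n. mink n n = 1 \<and> D = hyperideal_view n)"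

text \<open>Future null vector representing the forward ideal endpoint of the ray of x.\<close>
definition endpoint :: "TX \<Rightarrow> R4" where
  "endpoint x = fst x + snd x"

text \<open>H^s(x_u): inward unit normals to the horosphere through pi(x_u) centred at the
  endpoint of the ray of x_u.\<close>
definition Hs :: "TX \<Rightarrow> (TX) set" where
  "Hs xu = {(q, normal_towards (endpoint xu) q) | q. q \<in> horosphere (endpoint xu) (fst xu)}"

definition Bs :: "real \<Rightarrow> TX \<Rightarrow> (TX) set" where
  "Bs \<epsilon> xu = {xs \<in> Hs xu. path_dist (Hs xu) xu xs \<le> \<epsilon>}"

definition coord :: "TX \<Rightarrow> real \<Rightarrow> TX \<Rightarrow> TX" where
  "coord xu xf xs = gflow xf xs"

definition D_eps :: "(TX) set \<Rightarrow> real
    \<Rightarrow> ((TX) \<times> real \<times> (TX)) set" where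
  "D_eps D \<epsilon> = {(xu, xf, xs). xu \<in> D \<and> xf \<in> {-\<epsilon><..<\<epsilon>} \<and> xs \<in> Bs \<epsilon> xu}"

end

theory Submission
  imports Defs "HOL-Analysis.Analysis"
begin


lemma mink_sym: "mink x y = mink y x" by (simp add: mink_def algebra_simps)
lemma mink_add_left[simp]: "mink (x + y) z = mink x z + mink y z" by (simp add: mink_def algebra_simps)
lemma mink_add_right[simp]: "mink z (x + y) = mink z x + mink z y" by (simp add: mink_def algebra_simps)
lemma mink_diff_left[simp]: "mink (x - y) z = mink x z - mink y z" by (simp add: mink_def algebra_simps)
lemma mink_diff_right[simp]: "mink z (x - y) = mink z x - mink z y" by (simp add: mink_def algebra_simps)
lemma mink_minus_left[simp]: "mink (- x) z = - mink x z" by (simp add: mink_def algebra_simps)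
lemma mink_minus_right[simp]: "mink z (- x) = - mink z x" by (simp add: mink_def algebra_simps)
lemma mink_scaleR_left[simp]: "mink (c *\<^sub>R x) z = c * mink x z" by (simp add: mink_def algebra_simps)
lemma mink_scaleR_right[simp]: "mink z (c *\<^sub>R x) = c * mink z x" by (simp add: mink_def algebra_simps)
lemma mink_zero_left[simp]: "mink 0 z = 0" by (simp add: mink_def)
lemma mink_zero_right[simp]: "mink z 0 = 0" by (simp add: mink_def)

lemma bb_mink: "bounded_bilinear mink"
proof
  show "\<exists>K. \<forall>a b. norm (mink a b) \<le> norm a * norm b * K"
  proof (intro exI allI)
    fix a b :: R4
    have c: "\<And>i j. \<bar>a$i * b$j\<bar> \<le> norm a * norm b"
      by (simp add: abs_mult mult_mono component_le_norm_cart)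
    have "norm (mink a b) \<le> \<bar>a$0 * b$0\<bar> + \<bar>a$1 * b$1\<bar> + \<bar>a$2 * b$2\<bar> + \<bar>a$3 * b$3\<bar>"
      by (simp add: mink_def)
    also have "\<dots> \<le> norm a * norm b * 4" using c[of 0 0] c[of 1 1] c[of 2 2] c[of 3 3] by linarith
    finally show "norm (mink a b) \<le> norm a * norm b * 4" .
  qed
qed (simp_all add: mink_def algebra_simps)

lemma cs3: "(x1*y1+x2*y2+x3*y3)^2 \<le> (x1^2+x2^2+x3^2)*(y1^2+y2^2+(y3::real)^2)"
proof -
  have "(x1^2+x2^2+x3^2)*(y1^2+y2^2+y3^2) - (x1*y1+x2*y2+x3*y3)^2
     = (x1*y2-x2*y1)^2 + (x1*y3-x3*y1)^2 + (x2*y3-x3*y2)^2" by (simp add: power2_eq_square algebra_simps)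
  moreover have "(x1*y2-x2*y1)^2 + (x1*y3-x3*y1)^2 + (x2*y3-x3*y2)^2 \<ge> 0" by simp
  ultimately show ?thesis by linarith
qed

lemma spacelike:
  assumes "mink a q = 0" "mink q q = -1"
  shows "mink a a \<ge> 0"
proof -
  let ?A = "a$1^2 + a$2^2 + a$3^2" and ?Q = "q$1^2+q$2^2+q$3^2"
  have e1: "a$0 * q$0 = a$1*q$1 + a$2*q$2+a$3*q$3" using assms(1) by (simp add: mink_def)
  have e2: "?Q = q$0^2 - 1" using assms(2) by (simp add: mink_def power2_eq_square)
  have "(a$0 * q$0)^2 \<le> ?A * ?Q" unfolding e1 by (rule cs3)
  hence "a$0^2 * q$0^2 \<le> ?A * q$0^2 - ?A" unfolding e2 by (simp add: power_mult_distrib algebra_simps)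
  moreover have "?A \<ge> 0" by simp
  ultimately have "a$0^2 * q$0^2 \<le> ?A * q$0^2" by linarith
  moreover have "q$0^2 > 0" proof - have "?Q \<ge> 0" by simp thus ?thesis using e2 by linarith qed
  ultimately have "a$0^2 \<le> ?A" by simp
  thus ?thesis by (simp add: mink_def power2_eq_square)
qed

lemma future_lemma:
  assumes "mink q q = -1" "mink l l = 0" "l$0 > 0" "mink q l < 0"
  shows "q$0 > 0"
proof (rule ccontr)
  assume "\<not> q$0 > 0" hence q0: "q$0 \<le> 0" by simp
  let ?L = "l$1^2 + l$2^2 + l$3^2" and ?Q = "q$1^2+q$2^2+q$3^2" and ?X = "q$1*l$1 + q$2*l$2+q$3*l$3"
  have e1: "?X < q$0 * l$0" using assms(4) by (simp add: mink_def)
  have e2: "?Q = q$0^2 - 1" using assms(1) by (simp add: mink_def power2_eq_square)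
  have e3: "?L = l$0^2" using assms(2) by (simp add: mink_def power2_eq_square)
  have "?X^2 \<le> ?Q * ?L" by (rule cs3)
  also have "\<dots> = q$0^2 * l$0^2 - l$0^2" unfolding e2 e3 by (simp add: algebra_simps)
  also have "\<dots> < (q$0 * l$0)^2" using assms(3) by (simp add: power_mult_distrib)
  finally have lt: "?X^2 < (q$0 * l$0)^2" .
  have "q$0 * l$0 \<le> 0" using q0 assms(3) by (simp add: mult_nonpos_nonneg)
  hence "0 \<le> - (q$0 * l$0)" "- (q$0 * l$0) < - ?X" using e1 by linarith+
  hence "(- (q$0 * l$0))^2 < (- ?X)^2" by (intro power_strict_mono) auto
  hence "(q$0 * l$0)^2 \<le> ?X^2" unfolding power2_minus by (rule less_imp_le)
  with lt show False by simp
qed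

lemma neg_lemma:
  assumes "q \<in> H3" "null_future l"
  shows "mink q l < 0"
proof -
  have q: "mink q q = -1" "q$0 > 0" and l: "mink l l = 0" "l$0 > 0" using assms by (auto simp: H3_def null_future_def)
  let ?L = "l$1^2 + l$2^2 + l$3^2" and ?Q = "q$1^2+q$2^2+q$3^2" and ?X = "q$1*l$1 + q$2*l$2+q$3*l$3"
  have e2: "?Q = q$0^2 - 1" using q(1) by (simp add: mink_def power2_eq_square)
  have e3: "?L = l$0^2" using l(1) by (simp add: mink_def power2_eq_square)
  have "?X^2 \<le> ?Q * ?L" by (rule cs3)
  also have "\<dots> = q$0^2 * l$0^2 - l$0^2" unfolding e2 e3 by (simp add: algebra_simps)
  also have "\<dots> < (q$0 * l$0)^2" using l(2) by (simp add: power_mult_distrib)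
  finally have lt: "?X^2 < (q$0 * l$0)^2" .
  have pos: "q$0 * l$0 > 0" using q l by simp
  have "?X < q$0 * l$0"
  proof (rule ccontr)
    assume "\<not> ?X < q$0 * l$0"
    hence "q$0 * l$0 \<le> ?X" by simp
    hence "(q$0 * l$0)^2 \<le> ?X^2" using pos by (simp add: power_mono)
    with lt show False by simp
  qed
  thus ?thesis by (simp add: mink_def)
qed

lemma UT_iff: "(p,v) \<in> UT \<longleftrightarrow> p \<in> H3 \<and> mink v v = 1 \<and> mink p v = 0"
  by (simp add: UT_def)

lemma l0_pos:
  assumes "(p,v) \<in> UT" shows "(p+v)$0 > 0"
proof -
  have p: "mink p p = -1" "p$0 > 0" and v: "mink v v = 1" "mink p v = 0"
    using assms by (auto simp: UT_def H3_def)
  let ?V = "v $ 1^2 + v $ 2^2 + v $ 3^2" and ?P = "p$1^2+p$2^2+p$3^2"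
  have e1: "p$0 * v $ 0 = p$1* v $ 1 + p$2* v $ 2+p$3* v $ 3" using v(2) by (simp add: mink_def)
  have e2: "?P = p$0^2 - 1" using p(1) by (simp add: mink_def power2_eq_square)
  have e3: "?V = v $ 0^2 + 1" using v(1) by (simp add: mink_def power2_eq_square)
  have "(p$0 * v $ 0)^2 \<le> ?P * ?V" unfolding e1 by (rule cs3)
  hence "p$0^2 * v $ 0^2 \<le> (p$0^2 - 1) * (v $ 0^2 + 1)" unfolding e2 e3 by (simp add: power_mult_distrib)
  hence "v $ 0^2 < p$0^2" by (simp add: algebra_simps)
  hence "\<bar>v $ 0\<bar> < p$0" using power2_less_imp_less[of "\<bar>v $ 0\<bar>" "p$0"] p(2) by simp
  thus ?thesis by simp
qed

lemma view_UT:
  assumes "is_view D" shows "D \<subseteq> UT"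
proof -
  { fix p0 assume "p0 \<in> H3" "D = material_view p0"
    hence ?thesis by (auto simp: material_view_def) }
  moreover
  { fix l p assume a: "null_future l" "p \<in> H3" "D = ideal_view l p"
    have ?thesis
    proof
      fix x assume "x \<in> D"
      then obtain q where x: "x = (q, - normal_towards l q)" and q: "q \<in> H3" "mink q l = mink p l"
        using a by (auto simp: ideal_view_def horosphere_def)
      have c: "mink q l < 0" using neg_lemma[OF q(1) a(1)] .
      have ll: "mink l l = 0" and qq: "mink q q = -1" using a(1) q(1) by (auto simp: null_future_def H3_def)
      have lq: "mink l q = mink q l" by (rule mink_sym)
      show "x \<in> UT" unfolding x UT_iff normal_towards_def
        using c ll qq lq q(1) by (simp add: field_simps)
    qed }
  moreover
  { fix n assume "mink n n = 1" "D = hyperideal_view n"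
    hence ?thesis by (auto simp: hyperideal_view_def UT_def mink_sym) }
  ultimately show ?thesis using assms unfolding is_view_def by blast
qed

lemma gflow_add: "gflow a (gflow b x) = gflow (a+b) x"
  by (simp add: gflow_def cosh_add sinh_add algebra_simps)

lemma gflow_UT:
  assumes "x \<in> UT" shows "gflow \<tau> x \<in> UT"
proof -
  obtain p v where x: "x = (p,v)" by (cases x)
  have p: "mink p p = -1" "p$0 > 0" and v: "mink v v = 1" "mink p v = 0"
    using assms x by (auto simp: UT_def H3_def)
  have vp: "mink v p = 0" using v(2) mink_sym by metis
  have cs: "cosh \<tau> ^2 = sinh \<tau> ^2 + 1" by (rule cosh_square_eq)
  let ?P = "cosh \<tau> *\<^sub>R p + sinh \<tau> *\<^sub>R v" and ?V = "sinh \<tau> *\<^sub>R p + cosh \<tau> *\<^sub>R v"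
  have PP: "mink ?P ?P = -1" using p v vp cs by (simp add: algebra_simps power2_eq_square)
  have VV: "mink ?V ?V = 1" using p v vp cs by (simp add: algebra_simps power2_eq_square)
  have PV: "mink ?P ?V = 0" using p v vp cs by (simp add: algebra_simps power2_eq_square)
  have ll: "mink (p+v) (p+v) = 0" using p v vp by simp
  have l0: "(p+v)$0 > 0" using l0_pos assms x by simp
  have "mink ?P (p+v) = sinh \<tau> - cosh \<tau>" using p v vp by simp
  also have "\<dots> < 0" using sinh_less_cosh_real by simp
  finally have "?P$0 > 0" using future_lemma[OF PP ll l0] by simp
  thus ?thesis using PP VV PV p v vp by (simp add: x gflow_def UT_def H3_def)
qed



lemma Hs_char:
  assumes "xu = (p,v)" "xu \<in> UT"
  shows "x \<in> Hs xu \<longleftrightarrow> (\<exists>q. x = (q, (p+v) - q) \<and> q \<in> H3 \<and> mink q (p+v) = -1)"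
proof -
  have pp: "mink p p = -1" and v: "mink v v = 1" "mink p v = 0" using assms by (auto simp: UT_def H3_def)
  have pl: "mink p (p+v) = -1" using pp v by simp
  show ?thesis unfolding Hs_def horosphere_def normal_towards_def endpoint_def assms(1) fst_conv snd_conv pl
    by (auto simp del: mink_add_left mink_add_right)
qed

lemma Hs_UT:
  assumes "xu = (p,v)" "xu \<in> UT" "x \<in> Hs xu"
  shows "x \<in> UT"
proof -
  obtain q where x: "x = (q, (p+v) - q)" "q \<in> H3" "mink q (p+v) = -1" using Hs_char[OF assms(1,2)] assms(3) by auto
  have pp: "mink p p = -1" and v: "mink v v = 1" "mink p v = 0" using assms by (auto simp: UT_def H3_def)
  have vp: "mink v p = 0" using v mink_sym by metis
  have qq: "mink q q = -1" using x by (simp add: H3_def)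
  have ll: "mink (p+v) (p+v) = 0" using pp v vp by simp
  have lq: "mink (p+v) q = -1" using x(3) mink_sym by metis
  show ?thesis unfolding x(1) UT_iff using x(2) qq ll lq x(3)
    by (simp del: mink_add_left mink_add_right)
qed

lemma xu_Hs:
  assumes "xu = (p,v)" "xu \<in> UT" shows "xu \<in> Hs xu"
proof -
  have pp: "mink p p = -1" and v: "mink v v = 1" "mink p v = 0" and "p \<in> H3" using assms by (auto simp: UT_def H3_def)
  thus ?thesis using Hs_char[OF assms] assms(1) by (intro iffD2[OF Hs_char[OF assms]]) (rule exI[of _ p], simp)
qed

lemma const_deriv0:
  assumes "(F has_vector_derivative d) (at s)" "open S" "s \<in> S" "\<And>y. y \<in> S \<Longrightarrow> F y = c"
  shows "d = 0"
proof -
  have "((\<lambda>_. c) has_vector_derivative d) (at s)"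
    by (rule has_vector_derivative_transform_within_open[OF assms(1,2,3)]) (simp add: assms(4))
  moreover have "((\<lambda>_. c) has_vector_derivative 0) (at s)" by (rule has_vector_derivative_const)
  ultimately show ?thesis by (rule vector_derivative_unique_at)
qed

lemma deriv_mink:
  assumes "(f has_vector_derivative f') (at s)" "(g has_vector_derivative g') (at s)"
  shows "((\<lambda>y. mink (f y) (g y)) has_vector_derivative (mink (f s) g' + mink f' (g s))) (at s)"
  using bounded_bilinear.has_vector_derivative[OF bb_mink assms] .

lemma deriv_fst: "(\<gamma> has_vector_derivative D) (at s) \<Longrightarrow> ((\<lambda>y. fst (\<gamma> y)) has_vector_derivative fst D) (at s)"
  using bounded_linear.has_vector_derivative[OF bounded_linear_fst] by blast
lemma deriv_snd: "(\<gamma> has_vector_derivative D) (at s) \<Longrightarrow> ((\<lambda>y. snd (\<gamma> y)) has_vector_derivative snd D) (at s)"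
  using bounded_linear.has_vector_derivative[OF bounded_linear_snd] by blast

lemma UT_deriv:
  assumes "\<gamma> ` {0..1} \<subseteq> UT" "s \<in> {0<..<1}" "(\<gamma> has_vector_derivative D) (at s)"
  shows "mink (fst D) (fst (\<gamma> s)) = 0"
proof -
  have m1: "mink (fst (\<gamma> y)) (fst (\<gamma> y)) = -1" if "y \<in> {0..1}" for y
  proof -
    have "\<gamma> y \<in> UT" using assms(1) that by auto
    thus ?thesis by (cases "\<gamma> y") (auto simp: UT_def H3_def)
  qed
  have "((\<lambda>y. mink (fst (\<gamma> y)) (fst (\<gamma> y))) has_vector_derivative
     (mink (fst (\<gamma> s)) (fst D) + mink (fst D) (fst (\<gamma> s)))) (at s)"
    by (rule deriv_mink[OF deriv_fst deriv_fst]; rule assms(3))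
  hence "mink (fst (\<gamma> s)) (fst D) + mink (fst D) (fst (\<gamma> s)) = 0"
    apply (rule const_deriv0[where S="{0<..<1}" and c="-1"])
    using assms(2) m1 by auto
  thus ?thesis using mink_sym[of "fst (\<gamma> s)" "fst D"] by linarith
qed

lemma sasaki_nonneg:
  assumes "mink p p = -1" "mink a p = 0"
  shows "sasaki_norm (p,v) (a,b) \<ge> 0"
proof -
  have pp: "mink p p = -1" by fact
  let ?Dv = "b + mink b p *\<^sub>R p"
  have "mink ?Dv p = 0" using pp by simp
  hence "mink ?Dv ?Dv \<ge> 0" using spacelike pp by blast
  moreover have "mink a a \<ge> 0" using spacelike assms by blast
  ultimately show ?thesis unfolding sasaki_norm_def Let_def by simp
qed

definition pset :: "TX set \<Rightarrow> TX \<Rightarrow> TX \<Rightarrow> (real \<Rightarrow> TX) set" where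
 "pset N x y = {\<gamma>. \<gamma> piecewise_C1_differentiable_on {0..1}
       \<and> \<gamma> ` {0..1} \<subseteq> N \<and> \<gamma> 0 = x \<and> \<gamma> 1 = y
       \<and> (\<lambda>s. sasaki_norm (\<gamma> s) (vector_derivative \<gamma> (at s))) integrable_on {0..1}}"

lemma path_dist_pset: "path_dist N x y = Inf (path_len ` pset N x y)"
  unfolding path_dist_def pset_def ..

lemma pc1_diff:
  assumes "\<gamma> piecewise_C1_differentiable_on {0..1}"
  obtains K where "finite K" "\<And>s. s \<in> {0..1} - K \<Longrightarrow> s \<in> {0<..<1} \<and> (\<gamma> has_vector_derivative vector_derivative \<gamma> (at s)) (at s)"
proof -
  obtain K where K: "finite K" "\<gamma> C1_differentiable_on ({0..1} - K)"
    using assms by (auto simp: piecewise_C1_differentiable_on_def)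
  show ?thesis
  proof (rule that[of "K \<union> {0,1}"])
    show "finite (K \<union> {0,1})" using K by simp
    fix s assume "s \<in> {0..1} - (K \<union> {0,1})"
    thus "s \<in> {0<..<1} \<and> (\<gamma> has_vector_derivative vector_derivative \<gamma> (at s)) (at s)"
      using K(2) by (auto simp: C1_differentiable_on_eq vector_derivative_works[symmetric])
  qed
qed

lemma path_len_nonneg:
  assumes "\<gamma> \<in> pset N x y" "N \<subseteq> UT"
  shows "path_len \<gamma> \<ge> 0"
proof -
  have pc: "\<gamma> piecewise_C1_differentiable_on {0..1}" and im: "\<gamma> ` {0..1} \<subseteq> UT"
   and int: "(\<lambda>s. sasaki_norm (\<gamma> s) (vector_derivative \<gamma> (at s))) integrable_on {0..1}"
    using assms by (auto simp: pset_def)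
  obtain K where K: "finite K" "\<And>s. s \<in> {0..1} - K \<Longrightarrow> s \<in> {0<..<1} \<and> (\<gamma> has_vector_derivative vector_derivative \<gamma> (at s)) (at s)"
    using pc1_diff[OF pc] by blast
  have nn: "sasaki_norm (\<gamma> s) (vector_derivative \<gamma> (at s)) \<ge> 0" if "s \<in> {0..1} - K" for s
  proof -
    have s: "s \<in> {0<..<1}" and d: "(\<gamma> has_vector_derivative vector_derivative \<gamma> (at s)) (at s)" using K(2)[OF that] by auto
    have o: "mink (fst (vector_derivative \<gamma> (at s))) (fst (\<gamma> s)) = 0" by (rule UT_deriv[OF im s d])
    have "\<gamma> s \<in> UT" using im s by auto
    hence pp: "mink (fst (\<gamma> s)) (fst (\<gamma> s)) = -1" by (auto simp: UT_def H3_def)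
    show ?thesis using sasaki_nonneg[OF pp o, of "snd (\<gamma> s)" "snd (vector_derivative \<gamma> (at s))"] by simp
  qed
  let ?f = "\<lambda>s. sasaki_norm (\<gamma> s) (vector_derivative \<gamma> (at s))"
  have "path_len \<gamma> = integral {0..1} (\<lambda>s. \<bar>?f s\<bar>)"
    unfolding path_len_def by (rule integral_spike[of K]) (use K nn in auto)
  also have "\<dots> \<ge> 0"
    by (rule integral_nonneg) (auto intro!: integrable_spike_finite[OF K(1) _ int] simp: nn)
  finally show ?thesis .
qed



lemma deriv_scale: "(g has_vector_derivative g') F \<Longrightarrow> ((\<lambda>x. c *\<^sub>R g x) has_vector_derivative c *\<^sub>R g') F"
  using bounded_linear.has_vector_derivative[OF bounded_linear_scaleR_right] by blast

lemma gflow_deriv: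
  assumes "(\<gamma> has_vector_derivative D) (at s)"
  shows "((\<lambda>y. gflow t (\<gamma> y)) has_vector_derivative gflow t D) (at s)"
  unfolding gflow_def
  by (intro has_vector_derivative_Pair has_vector_derivative_add deriv_scale deriv_fst deriv_snd assms)

lemma flow_deriv:
  "((\<lambda>y. gflow (t + y * c) x) has_vector_derivative (c *\<^sub>R (snd (gflow (t + s*c) x), fst (gflow (t + s*c) x)))) (at s)"
  unfolding gflow_def
  by (auto intro!: derivative_eq_intros simp: algebra_simps)

lemma flow_speed:
  assumes "x \<in> UT"
  shows "sasaki_norm (gflow \<tau> x) (c *\<^sub>R (snd (gflow \<tau> x), fst (gflow \<tau> x))) = \<bar>c\<bar>"
proof -
  obtain P V where PV: "gflow \<tau> x = (P,V)" by (cases "gflow \<tau> x")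
  have "(P,V) \<in> UT" using gflow_UT[OF assms, of \<tau>] PV by simp
  hence pp: "mink P P = -1" and vv: "mink V V = 1" by (auto simp: UT_def H3_def)
  show ?thesis unfolding PV using pp vv by (simp add: sasaki_norm_def Let_def)
qed

lemma stable_contract:
  assumes "mink q q = -1" "mink q l = -1" "mink l l = 0" "mink a q = 0" "mink a l = 0"
  shows "sasaki_norm (gflow t (q, l - q)) (gflow t (a, -a)) = exp(-t) * sasaki_norm (q, l - q) (a, -a)"
proof -
  have e: "gflow t (a, -a) = (exp(-t) *\<^sub>R a, - (exp(-t) *\<^sub>R a))"
    by (simp add: gflow_def cosh_minus_sinh[symmetric] algebra_simps)
  have qa: "mink q a = 0" using assms(4) mink_sym by metis
  have la: "mink l a = 0" using assms(5) mink_sym by metis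
  have "sasaki_norm (gflow t (q, l - q)) (gflow t (a, -a)) = sqrt ((exp(-t))^2 * (2 * mink a a))"
    unfolding e by (simp add: sasaki_norm_def Let_def gflow_def assms qa la power2_eq_square algebra_simps)
  also have "\<dots> = exp(-t) * sqrt (2 * mink a a)" by (simp add: real_sqrt_mult)
  also have "sqrt (2 * mink a a) = sasaki_norm (q, l - q) (a, -a)"
    by (simp add: sasaki_norm_def Let_def assms qa la)
  finally show ?thesis .
qed

lemma Hs_deriv:
  assumes "xu = (p,v)" "xu \<in> UT" "\<gamma> ` {0..1} \<subseteq> Hs xu" "s \<in> {0<..<1}" "(\<gamma> has_vector_derivative D) (at s)"
  shows "snd D = - fst D" "mink (fst D) (p+v) = 0"
proof -
  have h: "\<exists>q. \<gamma> y = (q, (p+v) - q) \<and> q \<in> H3 \<and> mink q (p+v) = -1" if "y \<in> {0..1}" for y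
    using Hs_char[OF assms(1,2)] assms(3) that by blast
  have "((\<lambda>y. snd (\<gamma> y) + fst (\<gamma> y)) has_vector_derivative (snd D + fst D)) (at s)"
    by (intro has_vector_derivative_add deriv_fst deriv_snd assms(5))
  hence "snd D + fst D = 0"
    apply (rule const_deriv0[where S="{0<..<1}" and c="p+v"])
    apply simp
    using assms(4) apply simp
    subgoal for y using h[of y] by auto
    done
  thus "snd D = - fst D" by (simp add: eq_neg_iff_add_eq_0)
  have "((\<lambda>y. mink (fst (\<gamma> y)) (p+v)) has_vector_derivative (mink (fst (\<gamma> s)) 0 + mink (fst D) (p+v))) (at s)"
    by (intro deriv_mink deriv_fst assms(5) has_vector_derivative_const)
  hence "mink (fst (\<gamma> s)) 0 + mink (fst D) (p+v) = 0"
    apply (rule const_deriv0[where S="{0<..<1}" and c="-1"])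
    apply simp
    using assms(4) apply simp
    subgoal for y using h[of y] by auto
    done
  thus "mink (fst D) (p+v) = 0" by simp
qed



lemma horo_path:
  assumes xu: "xu = (p,v)" "xu \<in> UT" and xs: "xs \<in> Hs xu"
  shows "pset (Hs xu) xu xs \<noteq> {}"
proof -
  define l where "l = p + v"
  obtain q1 where q1: "xs = (q1, l - q1)" "q1 \<in> H3" "mink q1 l = -1"
    using Hs_char[OF xu] xs l_def by auto
  have pp: "mink p p = -1" and vv: "mink v v = 1" and pv: "mink p v = 0" and pH: "p \<in> H3"
    using xu by (auto simp: UT_def H3_def)
  have vp: "mink v p = 0" using pv mink_sym by metis
  have ll: "mink l l = 0" unfolding l_def using pp vv pv vp by simp
  have pl: "mink p l = -1" unfolding l_def using pp pv by simp
  have lp: "mink l p = -1" using pl mink_sym by metis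
  have q1q1: "mink q1 q1 = -1" using q1 by (simp add: H3_def)
  have lq1: "mink l q1 = -1" using q1 mink_sym by metis
  have l0: "l$0 > 0" unfolding l_def using l0_pos xu by simp
  define m where "m = mink p q1"
  have q1p: "mink q1 p = m" using m_def mink_sym by metis
  define Q where "Q s = p + s *\<^sub>R (q1 - p) + (s*(1-s)*(1+m)) *\<^sub>R l" for s
  define A where "A s = (q1 - p) + ((1 - 2 * s)*(1+m)) *\<^sub>R l" for s
  define g where "g s = (Q s, l - Q s)" for s
  note facts = pp pl lp ll q1q1 q1(3) lq1 m_def[symmetric] q1p
  have QQ: "mink (Q s) (Q s) = -1" for s
    unfolding Q_def using facts by (simp add: algebra_simps power2_eq_square)
  have Ql: "mink (Q s) l = -1" for s
    unfolding Q_def using facts by (simp add: algebra_simps)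
  have QH: "Q s \<in> H3" for s
    using future_lemma[OF QQ ll l0] Ql by (simp add: H3_def QQ)
  have gHs: "g s \<in> Hs xu" for s
    unfolding g_def using Hs_char[OF xu] QH Ql l_def by auto
  have AQ: "mink (A s) (Q s) = 0" for s
    unfolding Q_def A_def using facts by (simp add: algebra_simps)
  have AA: "mink (A s) (A s) = mink (q1 - p) (q1 - p)" for s
    unfolding A_def using facts by (simp add: algebra_simps)
  have dQ: "(Q has_vector_derivative A s) (at s)" for s
  proof -
    have d1: "((\<lambda>s. s * (1 - s) * (1 + m)) has_field_derivative ((1 - 2 * s)*(1+m))) (at s)"
      by (auto intro!: derivative_eq_intros simp: algebra_simps)
    have d0: "((\<lambda>s::real. s) has_field_derivative 1) (at s)" by (rule DERIV_ident)
    have "((\<lambda>s. p + s *\<^sub>R (q1 - p) + (s*(1-s)*(1+m)) *\<^sub>R l) has_vector_derivative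
        (0 + (s *\<^sub>R 0 + 1 *\<^sub>R (q1 - p)) + ((s*(1-s)*(1+m)) *\<^sub>R 0 + ((1 - 2 * s)*(1+m)) *\<^sub>R l))) (at s)"
      by (intro has_vector_derivative_add has_vector_derivative_const has_vector_derivative_scaleR d0 d1)
    thus ?thesis unfolding Q_def[abs_def] A_def by simp
  qed
  have dg: "(g has_vector_derivative (A s, - A s)) (at s)" for s
  proof -
    have "((\<lambda>s. (Q s, l - Q s)) has_vector_derivative (A s, 0 - A s)) (at s)"
      by (intro has_vector_derivative_Pair has_vector_derivative_diff has_vector_derivative_const dQ)
    thus ?thesis unfolding g_def[abs_def] by simp
  qed
  have vd: "vector_derivative g (at s) = (A s, - A s)" for s
    by (rule vector_derivative_at[OF dg])
  have integrand: "sasaki_norm (g s) (vector_derivative g (at s)) = sqrt (2 * mink (q1 - p) (q1 - p))" for s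
  proof -
    have "mink (A s) (Q s) = 0" by (rule AQ)
    thus ?thesis unfolding vd g_def sasaki_norm_def Let_def using AA[of s] by simp
  qed
  have "g \<in> pset (Hs xu) xu xs"
    unfolding pset_def
  proof (intro CollectI conjI)
    have "g C1_differentiable_on {0..1}"
      unfolding C1_differentiable_on_def
      apply (rule exI[of _ "\<lambda>s. (A s, - A s)"], intro conjI ballI)
       apply (rule dg)
      unfolding A_def by (intro continuous_intros)
    thus "g piecewise_C1_differentiable_on {0..1}" by (rule C1_differentiable_imp_piecewise)
    show "g ` {0..1} \<subseteq> Hs xu" using gHs by auto
    show "g 0 = xu" unfolding g_def Q_def xu l_def by simp
    show "g 1 = xs" unfolding g_def Q_def q1 by simp
    show "(\<lambda>s. sasaki_norm (g s) (vector_derivative g (at s))) integrable_on {0..1}"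
      unfolding integrand by (rule integrable_continuous_interval) (rule continuous_on_const)
  qed
  thus ?thesis by blast
qed



lemma join_len:
  fixes F :: "'a::real_normed_vector \<Rightarrow> 'a \<Rightarrow> real" and g1 g2 :: "real \<Rightarrow> 'a"
  assumes hom: "\<And>x v. F x (2 *\<^sub>R v) = 2 * F x v"
    and vp: "valid_path g1" "valid_path g2"
    and 1: "((\<lambda>s. F (g1 s) (vector_derivative g1 (at s))) has_integral I1) {0..1}"
    and 2: "((\<lambda>s. F (g2 s) (vector_derivative g2 (at s))) has_integral I2) {0..1}"
  shows "((\<lambda>s. F ((g1 +++ g2) s) (vector_derivative (g1 +++ g2) (at s))) has_integral (I1 + I2)) {0..1}"
proof -
  obtain s1 s2
    where s1: "finite s1" "\<forall>x\<in>{0..1} - s1. g1 differentiable at x"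
      and s2: "finite s2" "\<forall>x\<in>{0..1} - s2. g2 differentiable at x"
    using vp
    by (auto simp: valid_path_def piecewise_C1_differentiable_on_def C1_differentiable_on_eq)
  have i1: "((\<lambda>x. 2 * F (g1 (2*x)) (vector_derivative g1 (at (2*x)))) has_integral I1) {0..1/2}"
   and i2: "((\<lambda>x. 2 * F (g2 (2*x - 1)) (vector_derivative g2 (at (2*x - 1)))) has_integral I2) {1/2..1}"
    using has_integral_affinity01 [OF 1, where m= 2 and c=0, THEN has_integral_cmul [where c=2]]
          has_integral_affinity01 [OF 2, where m= 2 and c="-1", THEN has_integral_cmul [where c=2]]
    by (simp_all only: image_affinity_atLeastAtMost_div_diff, simp_all add: mult_ac)
  have g1: "vector_derivative (\<lambda>x. if x*2 \<le> 1 then g1 (2*x) else g2 (2*x - 1)) (at z) =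
            2 *\<^sub>R vector_derivative g1 (at (z*2))"
      if "0 \<le> z" "z*2 < 1" "z*2 \<notin> s1" for z
  proof (rule vector_derivative_at [OF has_vector_derivative_transform_within])
    show "0 < \<bar>z - 1/2\<bar>"
      using that by auto
    have "((*) 2 has_vector_derivative 2) (at z)"
      by (simp add: has_vector_derivative_def has_derivative_def bounded_linear_mult_left)
    moreover have "(g1 has_vector_derivative vector_derivative g1 (at (z * 2))) (at (2 * z))"
      using s1 that by (auto simp: algebra_simps vector_derivative_works)
    ultimately
    show "((\<lambda>x. g1 (2 * x)) has_vector_derivative 2 *\<^sub>R vector_derivative g1 (at (z * 2))) (at z)"
      by (intro vector_diff_chain_at [simplified o_def])
  qed (use that in \<open>simp_all add: dist_real_def abs_if split: if_split_asm\<close>)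
  have g2: "vector_derivative (\<lambda>x. if x*2 \<le> 1 then g1 (2*x) else g2 (2*x - 1)) (at z) =
            2 *\<^sub>R vector_derivative g2 (at (z*2 - 1))"
           if "1 < z*2" "z \<le> 1" "z*2 - 1 \<notin> s2" for z
  proof (rule vector_derivative_at [OF has_vector_derivative_transform_within])
    show "0 < \<bar>z - 1/2\<bar>"
      using that by auto
    have "((\<lambda>x. 2 * x - 1) has_vector_derivative 2) (at z)"
      by (simp add: has_vector_derivative_def has_derivative_def bounded_linear_mult_left)
    moreover have "(g2 has_vector_derivative vector_derivative g2 (at (z * 2 - 1))) (at (2 * z - 1))"
      using s2 that by (auto simp: algebra_simps vector_derivative_works)
    ultimately
    show "((\<lambda>x. g2 (2 * x - 1)) has_vector_derivative 2 *\<^sub>R vector_derivative g2 (at (z * 2 - 1))) (at z)"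
      by (intro vector_diff_chain_at [simplified o_def])
  qed (use that in \<open>simp_all add: dist_real_def abs_if split: if_split_asm\<close>)
  have "((\<lambda>x. F ((g1 +++ g2) x) (vector_derivative (g1 +++ g2) (at x))) has_integral I1) {0..1/2}"
  proof (rule has_integral_spike_finite [OF _ _ i1])
    show "finite (insert (1/2) ((*) 2 -` s1))"
      using s1 by (force intro: finite_vimageI [where h = "(*)2"] inj_onI)
  qed (auto simp add: joinpaths_def hom mult_ac g1)
  moreover have "((\<lambda>x. F ((g1 +++ g2) x) (vector_derivative (g1 +++ g2) (at x))) has_integral I2) {1/2..1}"
  proof (rule has_integral_spike_finite [OF _ _ i2])
    show "finite (insert (1/2) ((\<lambda>x. 2 * x - 1) -` s2))"
      using s2 by (force intro: finite_vimageI [where h = "\<lambda>x. 2*x-1"] inj_onI)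
  qed (auto simp add: joinpaths_def hom mult_ac g2)
  ultimately
  show ?thesis
    by (simp add: has_integral_combine [where c = "1/2"])
qed


lemma sasaki_norm_scale: "sasaki_norm x (c *\<^sub>R dx) = \<bar>c\<bar> * sasaki_norm x dx"
proof -
  obtain p v where x: "x = (p,v)" by (cases x)
  obtain a b where dx: "dx = (a,b)" by (cases dx)
  have "sasaki_norm x (c *\<^sub>R dx) = sqrt (c^2 * (mink a a + mink (b + mink b p *\<^sub>R p) (b + mink b p *\<^sub>R p)))"
    unfolding x dx sasaki_norm_def Let_def by (simp add: algebra_simps power2_eq_square)
  also have "\<dots> = \<bar>c\<bar> * sasaki_norm x dx"
    unfolding x dx sasaki_norm_def Let_def by (simp add: real_sqrt_mult)
  finally show ?thesis .
qed

theorem lemma10p14: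
  fixes D :: "(TX) set" and t \<epsilon> xf :: real and xu xs :: "TX"
  assumes "is_view D"
    and "0 \<le> t" and "0 < \<epsilon>" and "\<epsilon> < 1"
    and "(xu, xf, xs) \<in> D_eps D \<epsilon>"
  shows "dX (gflow t xu) (gflow t (coord xu xf xs)) \<le> 2 * \<epsilon>"
proof -
  have xuD: "xu \<in> D" and xf: "-\<epsilon> < xf" "xf < \<epsilon>" and xsB: "xs \<in> Bs \<epsilon> xu"
    using assms(5) by (auto simp: D_eps_def)
  have xuUT: "xu \<in> UT" using view_UT[OF assms(1)] xuD by auto
  obtain p v where xu: "xu = (p,v)" by (cases xu)
  define l where "l = p + v"
  have xsHs: "xs \<in> Hs xu" and pd: "path_dist (Hs xu) xu xs \<le> \<epsilon>" using xsB by (auto simp: Bs_def)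
  have HsUT: "Hs xu \<subseteq> UT" using Hs_UT[OF xu xuUT] by blast
  have xsUT: "xs \<in> UT" using HsUT xsHs by auto
  let ?S = "pset (Hs xu) xu xs"
  have ne: "path_len ` ?S \<noteq> {}" using horo_path[OF xu xuUT xsHs] by simp
  have bdd: "bdd_below (path_len ` ?S)"
    by (rule bdd_belowI[of _ 0]) (auto intro: path_len_nonneg[OF _ HsUT])
  have "Inf (path_len ` ?S) < 2*\<epsilon> - \<bar>xf\<bar>" using pd path_dist_pset[of "Hs xu" xu xs] xf by simp
  then obtain \<gamma> where \<gamma>S: "\<gamma> \<in> ?S" and \<gamma>L: "path_len \<gamma> < 2*\<epsilon> - \<bar>xf\<bar>"
    using cInf_less_iff[OF ne bdd] by auto
  have \<gamma>pc: "\<gamma> piecewise_C1_differentiable_on {0..1}" and \<gamma>im: "\<gamma> ` {0..1} \<subseteq> Hs xu"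
    and \<gamma>0: "\<gamma> 0 = xu" and \<gamma>1: "\<gamma> 1 = xs"
    and \<gamma>int: "(\<lambda>s. sasaki_norm (\<gamma> s) (vector_derivative \<gamma> (at s))) integrable_on {0..1}"
    using \<gamma>S by (auto simp: pset_def)
  have \<gamma>imUT: "\<gamma> ` {0..1} \<subseteq> UT" using \<gamma>im HsUT by auto
  have Lnn: "path_len \<gamma> \<ge> 0" by (rule path_len_nonneg[OF \<gamma>S HsUT])
  define g1 where "g1 s = gflow t (\<gamma> s)" for s
  define g2 where "g2 s = gflow (t + s * xf) xs" for s
  have v1: "valid_path g1"
  proof -
    obtain K where K: "finite K" "\<gamma> C1_differentiable_on ({0..1} - K)" and c: "continuous_on {0..1} \<gamma>"
      using \<gamma>pc by (auto simp: piecewise_C1_differentiable_on_def)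
    obtain D\<gamma> where D\<gamma>: "\<And>x. x \<in> {0..1} - K \<Longrightarrow> (\<gamma> has_vector_derivative D\<gamma> x) (at x)"
      "continuous_on ({0..1} - K) D\<gamma>"
      using K(2) unfolding C1_differentiable_on_def by blast
    have "g1 C1_differentiable_on ({0..1} - K)"
      unfolding C1_differentiable_on_def
    proof (intro exI conjI ballI)
      fix x assume "x \<in> {0..1} - K"
      thus "(g1 has_vector_derivative gflow t (D\<gamma> x)) (at x)"
        unfolding g1_def[abs_def] by (intro gflow_deriv D\<gamma>)
    next
      show "continuous_on ({0..1} - K) (\<lambda>x. gflow t (D\<gamma> x))"
        unfolding gflow_def by (intro continuous_intros D\<gamma>(2))
    qed
    moreover have "continuous_on {0..1} g1"
      unfolding g1_def[abs_def] gflow_def by (intro continuous_intros c)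
    ultimately show ?thesis using K(1) unfolding valid_path_def piecewise_C1_differentiable_on_def by blast
  qed
  have dg2: "(g2 has_vector_derivative (xf *\<^sub>R (snd (gflow (t + s*xf) xs), fst (gflow (t + s*xf) xs)))) (at s)" for s
    unfolding g2_def[abs_def] by (rule flow_deriv)
  have v2: "valid_path g2"
  proof -
    have "g2 C1_differentiable_on {0..1}"
      unfolding C1_differentiable_on_def
      apply (rule exI[of _ "\<lambda>s. xf *\<^sub>R (snd (gflow (t + s*xf) xs), fst (gflow (t + s*xf) xs))"])
      apply (intro conjI ballI)
       apply (rule dg2)
      unfolding gflow_def by (intro continuous_intros)
    thus ?thesis unfolding valid_path_def by (rule C1_differentiable_imp_piecewise)
  qed
  have fs: "pathfinish g1 = pathstart g2"
    unfolding pathfinish_def pathstart_def g1_def g2_def \<gamma>1 by simp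
  have I1: "((\<lambda>s. sasaki_norm (g1 s) (vector_derivative g1 (at s))) has_integral (exp(-t) * path_len \<gamma>)) {0..1}"
  proof -
    have h0: "((\<lambda>s. sasaki_norm (\<gamma> s) (vector_derivative \<gamma> (at s))) has_integral path_len \<gamma>) {0..1}"
      unfolding path_len_def using \<gamma>int by (rule integrable_integral)
    have h1: "((\<lambda>s. exp(-t) * sasaki_norm (\<gamma> s) (vector_derivative \<gamma> (at s))) has_integral (exp(-t) * path_len \<gamma>)) {0..1}"
      using has_integral_mult_right[OF h0] .
    obtain K where K: "finite K" "\<And>s. s \<in> {0..1} - K \<Longrightarrow> s \<in> {0<..<1} \<and> (\<gamma> has_vector_derivative vector_derivative \<gamma> (at s)) (at s)"
      using pc1_diff[OF \<gamma>pc] by blast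
    show ?thesis
    proof (rule has_integral_spike_finite[OF K(1) _ h1])
      fix s assume s: "s \<in> {0..1} - K"
      have s01: "s \<in> {0<..<1}" and d: "(\<gamma> has_vector_derivative vector_derivative \<gamma> (at s)) (at s)"
        using K(2)[OF s] by auto
      define Dd where "Dd = vector_derivative \<gamma> (at s)"
      have vd1: "vector_derivative g1 (at s) = gflow t Dd"
        unfolding Dd_def g1_def[abs_def] by (rule vector_derivative_at[OF gflow_deriv[OF d]])
      have "\<gamma> s \<in> Hs xu" using \<gamma>im s by auto
      then obtain q where q: "\<gamma> s = (q, l - q)" "q \<in> H3" "mink q l = -1"
        using Hs_char[OF xu xuUT] l_def by auto
      have sD: "snd Dd = - fst Dd" and aL: "mink (fst Dd) l = 0"
        using Hs_deriv[OF xu xuUT \<gamma>im s01 d] l_def Dd_def by auto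
      have aq: "mink (fst Dd) q = 0" using UT_deriv[OF \<gamma>imUT s01 d] q Dd_def by simp
      have Dd: "Dd = (fst Dd, - fst Dd)" using sD by (metis prod.collapse)
      have ll: "mink l l = 0" and qq: "mink q q = -1"
        using xuUT q(2) unfolding l_def xu by (auto simp: UT_def H3_def mink_sym[of v p])
      show "sasaki_norm (g1 s) (vector_derivative g1 (at s)) = exp(-t) * sasaki_norm (\<gamma> s) (vector_derivative \<gamma> (at s))"
        unfolding vd1 g1_def Dd_def[symmetric] q(1)
        by (subst Dd, subst (2) Dd, rule stable_contract[OF qq q(3) ll aq aL])
    qed
  qed
  have I2: "((\<lambda>s. sasaki_norm (g2 s) (vector_derivative g2 (at s))) has_integral \<bar>xf\<bar>) {0..1}"
  proof -
    have "sasaki_norm (g2 s) (vector_derivative g2 (at s)) = \<bar>xf\<bar>" for s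
      unfolding vector_derivative_at[OF dg2] g2_def using flow_speed[OF xsUT] by simp
    moreover have "((\<lambda>s. \<bar>xf\<bar>) has_integral \<bar>xf\<bar>) {0..1::real}"
      using has_integral_const_real[of "\<bar>xf\<bar>" 0 1] by simp
    ultimately show ?thesis by simp
  qed
  define G where "G = g1 +++ g2"
  have IG: "((\<lambda>s. sasaki_norm (G s) (vector_derivative G (at s))) has_integral (exp(-t) * path_len \<gamma> + \<bar>xf\<bar>)) {0..1}"
    unfolding G_def by (rule join_len[OF _ v1 v2 I1 I2]) (simp add: sasaki_norm_scale)
  have G0: "G 0 = gflow t xu" unfolding G_def joinpaths_def g1_def using \<gamma>0 by simp
  have G1: "G 1 = gflow t (coord xu xf xs)" unfolding G_def joinpaths_def g2_def coord_def gflow_add by simp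
  have Gim: "G ` {0..1} \<subseteq> UT"
  proof
    fix y assume "y \<in> G ` {0..1}"
    then obtain s where s: "s \<in> {0..1}" "y = G s" by auto
    show "y \<in> UT"
    proof (cases "s \<le> 1/2")
      case True
      hence "\<gamma> (2 * s) \<in> UT" using \<gamma>imUT s by auto
      thus ?thesis using s True by (simp add: G_def joinpaths_def g1_def gflow_UT)
    next
      case False
      thus ?thesis using s xsUT by (simp add: G_def joinpaths_def g2_def gflow_UT)
    qed
  qed
  have GS: "G \<in> pset UT (gflow t xu) (gflow t (coord xu xf xs))"
    unfolding pset_def
  proof (intro CollectI conjI)
    show "G piecewise_C1_differentiable_on {0..1}"
      using valid_path_join[OF v1 v2 fs] unfolding G_def valid_path_def .
    show "G ` {0..1} \<subseteq> UT" by (rule Gim)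
    show "G 0 = gflow t xu" by (rule G0)
    show "G 1 = gflow t (coord xu xf xs)" by (rule G1)
    show "(\<lambda>s. sasaki_norm (G s) (vector_derivative G (at s))) integrable_on {0..1}"
      using IG by blast
  qed
  have lenG: "path_len G = exp(-t) * path_len \<gamma> + \<bar>xf\<bar>"
    using integral_unique[OF IG] unfolding path_len_def[of G] by simp
  have bddX: "bdd_below (path_len ` pset UT (gflow t xu) (gflow t (coord xu xf xs)))"
    by (rule bdd_belowI[of _ 0]) (auto intro: path_len_nonneg)
  have "dX (gflow t xu) (gflow t (coord xu xf xs)) \<le> path_len G"
    unfolding dX_def path_dist_pset by (rule cInf_lower[OF imageI[OF GS] bddX])
  also have "\<dots> \<le> path_len \<gamma> + \<bar>xf\<bar>"
  proof -
    have "exp(-t) \<le> 1" using assms(2) by simp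
    hence "exp(-t) * path_len \<gamma> \<le> path_len \<gamma>" using Lnn by (simp add: mult_left_le_one_le)
    thus ?thesis unfolding lenG by simp
  qed
  also have "\<dots> \<le> 2 * \<epsilon>" using \<gamma>L by simp
  finally show ?thesis .
qed

end
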